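(* Let $b\in\mathcal E_1$ with $b-1$ flat at $0$, let $\theta$ be the inverse germ of $t\mapsto t\,b(t)$, and let $\sigma(x)=\theta(x)^4$ with iterates $\sigma^n$ ($\sigma^0=\mathrm{id}$). There exists $\varepsilon>0$ such that for any smooth $\alpha$ with $\alpha(0)=\alpha'(0)=0$ and any $C^1$ function $\lambda$ with $\lambda(0)=\lambda'(0)=0$ (both defined on $(-\varepsilon,\varepsilon)$), setting $$u_n(x)=\alpha(x)\,\alpha(\sigma(x))\,\alpha(\sigma^2(x))\cdots\alpha(\sigma^n(x))\,\lambda(\sigma^{n+1}(x)),$$ (i) the series $\sum_{n=0}^{\infty}u_n(x)$ converges pointwise on $|x|<\varepsilon$, and (ii) its sum is of class $C^1$.
   Context: $\mathcal E_1$ denotes the ring of smooth function germs at $0\in\mathbb R$. A germ is flat at $0$ if all its derivatives (including its value) vanish at $0$. *)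

theory Defs
  imports "HOL-Analysis.Analysis"
begin

definition smooth_on :: "real set \<Rightarrow> (real \<Rightarrow> real) \<Rightarrow> bool" where
  "smooth_on S f \<longleftrightarrow> (\<forall>n. (deriv ^^ n) f differentiable_on S)"

definition C1_on :: "real set \<Rightarrow> (real \<Rightarrow> real) \<Rightarrow> bool" where
  "C1_on S f \<longleftrightarrow> f differentiable_on S \<and> continuous_on S (deriv f)"

definition smooth_germ :: "(real \<Rightarrow> real) \<Rightarrow> bool" where
  "smooth_germ f \<longleftrightarrow> (\<exists>r>0. smooth_on {-r<..<r} f)"

definition flat_at_0 :: "(real \<Rightarrow> real) \<Rightarrow> bool" where
  "flat_at_0 f \<longleftrightarrow> (\<forall>n. (deriv ^^ n) f 0 = 0)"

definition inverse_germ :: "(real \<Rightarrow> real) \<Rightarrow> (real \<Rightarrow> real) \<Rightarrow> bool" where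
  "inverse_germ \<theta> \<phi> \<longleftrightarrow> \<theta> 0 = 0 \<and> isCont \<theta> 0 \<and>
     (\<forall>\<^sub>F x in nhds 0. \<theta> (\<phi> x) = x) \<and> (\<forall>\<^sub>F x in nhds 0. \<phi> (\<theta> x) = x)"

end

theory Submission
  imports Defs
begin


primrec Uf :: "(real\<Rightarrow>real) \<Rightarrow> (real\<Rightarrow>real) \<Rightarrow> (real\<Rightarrow>real) \<Rightarrow> nat \<Rightarrow> real \<Rightarrow> real" where
  "Uf s a l 0 y = a y * l (s y)"
| "Uf s a l (Suc n) y = a y * Uf s a l n (s y)"

primrec Ud :: "(real\<Rightarrow>real) \<Rightarrow> (real\<Rightarrow>real) \<Rightarrow> (real\<Rightarrow>real) \<Rightarrow> (real\<Rightarrow>real) \<Rightarrow> (real\<Rightarrow>real) \<Rightarrow> (real\<Rightarrow>real) \<Rightarrow> nat \<Rightarrow> real \<Rightarrow> real" where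
  "Ud s s' a a' l l' 0 y = a' y * l (s y) + a y * (l' (s y) * s' y)"
| "Ud s s' a a' l l' (Suc n) y = a' y * Uf s a l n (s y) + a y * (Ud s s' a a' l l' n (s y) * s' y)"

lemma Uf_prod: "Uf s a l n x = (\<Prod>k\<le>n. a ((s ^^ k) x)) * l ((s ^^ Suc n) x)"
proof (induction n arbitrary: x)
  case 0
  then show ?case by simp
next
  case (Suc n)
  have "Uf s a l (Suc n) x = a x * ((\<Prod>k\<le>n. a ((s ^^ k) (s x))) * l ((s ^^ Suc n) (s x)))"
    using Suc by simp
  also have "\<dots> = (\<Prod>k\<le>Suc n. a ((s ^^ k) x)) * l ((s ^^ Suc (Suc n)) x)"
    unfolding prod.atMost_Suc_shift by (simp only: funpow_Suc_right comp_def funpow_0 mult.assoc)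
  finally show ?case .
qed

locale setup3 =
  fixes e :: real and s s' a a' l l' :: "real \<Rightarrow> real"
  assumes e: "e > 0"
    and sd: "\<And>y. y \<in> {-e<..<e} \<Longrightarrow> (s has_real_derivative s' y) (at y)"
    and sc: "continuous_on {-e<..<e} s'"
    and sb: "\<And>y. y \<in> {-e<..<e} \<Longrightarrow> \<bar>s y\<bar> \<le> \<bar>y\<bar> / 2"
    and sb': "\<And>y. y \<in> {-e<..<e} \<Longrightarrow> \<bar>s' y\<bar> \<le> 1"
    and ad: "\<And>y. y \<in> {-e<..<e} \<Longrightarrow> (a has_real_derivative a' y) (at y)"
    and ac: "continuous_on {-e<..<e} a'"
    and ld: "\<And>y. y \<in> {-e<..<e} \<Longrightarrow> (l has_real_derivative l' y) (at y)"
    and lc: "continuous_on {-e<..<e} l'"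
    and a0: "a 0 = 0"
begin

abbreviation "S \<equiv> {-e<..<e}"
abbreviation "U \<equiv> Uf s a l"
abbreviation "D \<equiv> Ud s s' a a' l l'"

lemma s_in: "y \<in> S \<Longrightarrow> s y \<in> S"
  using sb[of y] by auto

lemma s_cont: "continuous_on S s"
  using sd by (meson DERIV_continuous continuous_at_imp_continuous_on)
lemma a_cont: "continuous_on S a"
  using ad by (meson DERIV_continuous continuous_at_imp_continuous_on)
lemma l_cont: "continuous_on S l"
  using ld by (meson DERIV_continuous continuous_at_imp_continuous_on)

lemma comp_cont: "continuous_on S f \<Longrightarrow> continuous_on S (\<lambda>y. f (s y))"
  by (rule continuous_on_compose2[OF _ s_cont]) (auto dest: s_in)

lemma UD: "(\<forall>y\<in>S. (U n has_real_derivative D n y) (at y)) \<and> continuous_on S (D n) \<and> continuous_on S (U n)"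
proof (induction n)
  case 0
  have "(U 0 has_real_derivative D 0 y) (at y)" if y: "y \<in> S" for y
  proof -
    have "((\<lambda>y. l (s y)) has_real_derivative l' (s y) * s' y) (at y)"
      by (rule DERIV_chain2[OF ld[OF s_in[OF y]] sd[OF y]])
    from DERIV_mult[OF ad[OF y] this] have "((\<lambda>y. a y * l (s y)) has_real_derivative D 0 y) (at y)"
      by (rule DERIV_cong) (simp add: algebra_simps)
    moreover have "U 0 = (\<lambda>y. a y * l (s y))" by (rule ext) simp
    ultimately show ?thesis by simp
  qed
  moreover have "continuous_on S (D 0)"
    by (simp, intro continuous_intros ac a_cont comp_cont l_cont lc sc)
  moreover have "continuous_on S (U 0)"
    by (simp, intro continuous_intros a_cont comp_cont l_cont)
  ultimately show ?case by blast
next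
  case (Suc n)
  have "(U (Suc n) has_real_derivative D (Suc n) y) (at y)" if y: "y \<in> S" for y
  proof -
    have "((\<lambda>y. U n (s y)) has_real_derivative D n (s y) * s' y) (at y)"
      using Suc s_in[OF y] by (intro DERIV_chain2[OF _ sd[OF y]]) auto
    from DERIV_mult[OF ad[OF y] this] have "((\<lambda>y. a y * U n (s y)) has_real_derivative D (Suc n) y) (at y)"
      by (rule DERIV_cong) (simp add: algebra_simps)
    moreover have "U (Suc n) = (\<lambda>y. a y * U n (s y))" by (rule ext) simp
    ultimately show ?thesis by simp
  qed
  moreover have "continuous_on S (D (Suc n))"
    using Suc by (simp, intro continuous_intros ac a_cont comp_cont sc) auto
  moreover have "continuous_on S (U (Suc n))"
    using Suc by (simp, intro continuous_intros a_cont comp_cont) auto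
  ultimately show ?case by blast
qed

lemma bounds:
  assumes r: "0 < r" "r < e"
  shows "\<exists>M N. \<forall>n. \<forall>y\<in>{-r..r}. \<bar>U n y\<bar> \<le> M / 2^n \<and> \<bar>D n y\<bar> \<le> N / 2^n"
proof -
  define K where "K = {-r..r}"
  have KS: "K \<subseteq> S" using r by (auto simp: K_def)
  have cK: "compact K" by (simp add: K_def)
  have UDK: "continuous_on K (U n) \<and> continuous_on K (D n)" for n
    using UD[of n] continuous_on_subset[OF _ KS] by blast
  obtain A where A: "A \<ge> 0" "\<And>y. y \<in> K \<Longrightarrow> norm (a y) \<le> A"
    using continuous_on_compact_bound[OF cK continuous_on_subset[OF a_cont KS]] by blast
  obtain A1 where A1: "A1 \<ge> 0" "\<And>y. y \<in> K \<Longrightarrow> norm (a' y) \<le> A1"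
    using continuous_on_compact_bound[OF cK continuous_on_subset[OF ac KS]] by blast
  obtain P0 where P0: "P0 \<ge> 0" "\<And>y. y \<in> K \<Longrightarrow> norm (U 0 y) \<le> P0"
    using continuous_on_compact_bound[OF cK conjunct1[OF UDK]] by blast
  obtain Q0 where Q0: "Q0 \<ge> 0" "\<And>y. y \<in> K \<Longrightarrow> norm (D 0 y) \<le> Q0"
    using continuous_on_compact_bound[OF cK conjunct2[OF UDK]] by blast
  have asmall: "\<bar>a y\<bar> \<le> A1 * \<bar>y\<bar>" if y: "y \<in> K" for y
  proof -
    have cvx: "convex K" by (simp add: K_def)
    have der: "(a has_field_derivative a' z) (at z within K)" if "z \<in> K" for z
    proof -
      have "z \<in> S" using KS that by blast
      then have "(a has_field_derivative a' z) (at z)" by (rule ad)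
      then show ?thesis by (rule has_field_derivative_at_within)
    qed
    have bd: "norm (a' z) \<le> A1" if "z \<in> K" for z using A1(2) that .
    have z: "0 \<in> K" using r by (simp add: K_def)
    have "norm (a y - a 0) \<le> A1 * norm (y - 0)"
      by (rule field_differentiable_bound[OF cvx der bd y z])
    then show ?thesis using a0 by simp
  qed
  define \<rho> where "\<rho> = min r (1 / (4 * (A1 + 1)))"
  have \<rho>pos: "\<rho> > 0" using r A1 by (simp add: \<rho>_def)
  have \<rho>r: "\<rho> \<le> r" by (simp add: \<rho>_def)
  have A1\<rho>: "A1 * \<rho> \<le> 1/4"
  proof -
    have "\<rho> \<le> 1 / (4 * (A1 + 1))" by (simp add: \<rho>_def)
    then have "A1 * \<rho> \<le> A1 * (1 / (4 * (A1 + 1)))" by (rule mult_left_mono[OF _ A1(1)])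
    also have "\<dots> \<le> 1/4" using A1 by (simp add: pos_divide_le_eq)
    finally show ?thesis .
  qed
  define N0 where "N0 = max Q0 (4 * A1 * P0)"
  have N0nn: "N0 \<ge> 0" using Q0(1) by (simp add: N0_def)
  have base: "\<forall>y. \<bar>y\<bar> \<le> \<rho> \<longrightarrow> \<bar>U n y\<bar> \<le> P0 / 2^n \<and> \<bar>D n y\<bar> \<le> N0 / 2^n" for n
  proof (induction n)
    case 0
    show ?case
    proof (intro allI impI)
      fix y assume "\<bar>y\<bar> \<le> \<rho>"
      then have yK: "y \<in> K" using \<rho>r by (auto simp: K_def abs_le_iff)
      have "\<bar>U 0 y\<bar> \<le> P0" using P0(2)[OF yK] by simp
      moreover have "\<bar>D 0 y\<bar> \<le> N0" using Q0(2)[OF yK] unfolding N0_def by simp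
      ultimately show "\<bar>U 0 y\<bar> \<le> P0 / 2^0 \<and> \<bar>D 0 y\<bar> \<le> N0 / 2^0" by simp
    qed
  next
    case (Suc n)
    show ?case
    proof (intro allI impI)
      fix y assume y: "\<bar>y\<bar> \<le> \<rho>"
      have yK: "y \<in> K" using y \<rho>r by (auto simp: K_def)
      have yS: "y \<in> S" using yK KS by auto
      have sy: "\<bar>s y\<bar> \<le> \<rho>" using sb[OF yS] y \<rho>pos by linarith
      have ay: "\<bar>a y\<bar> \<le> 1/4"
        using asmall[OF yK] A1\<rho> mult_left_mono[OF y A1(1)] by linarith
      have a'y: "\<bar>a' y\<bar> \<le> A1" using A1(2)[OF yK] by simp
      have s'y: "\<bar>s' y\<bar> \<le> 1" using sb'[OF yS] .
      define q where "q = (2::real)^n"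
      have q: "q > 0" by (simp add: q_def)
      have IU: "\<bar>U n (s y)\<bar> \<le> P0 / q" and ID: "\<bar>D n (s y)\<bar> \<le> N0 / q"
        using Suc sy by (auto simp: q_def)
      have "\<bar>U (Suc n) y\<bar> = \<bar>a y\<bar> * \<bar>U n (s y)\<bar>" by (simp add: abs_mult)
      also have "\<dots> \<le> (1/4) * (P0 / q)" by (intro mult_mono ay IU) auto
      also have "\<dots> \<le> P0 / 2^(Suc n)" using q P0(1) by (simp add: q_def frac_le)
      finally have c1: "\<bar>U (Suc n) y\<bar> \<le> P0 / 2^(Suc n)" .
      have "\<bar>D (Suc n) y\<bar> \<le> \<bar>a' y\<bar> * \<bar>U n (s y)\<bar> + \<bar>a y\<bar> * (\<bar>D n (s y)\<bar> * \<bar>s' y\<bar>)"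
        by (simp add: abs_mult abs_triangle_ineq[THEN order_trans])
      also have "\<dots> \<le> A1 * (P0 / q) + (1/4) * ((N0 / q) * 1)"
        by (intro add_mono mult_mono ay IU a'y ID s'y) (use A1 N0nn q in auto)
      also have "\<dots> = (4 * A1 * P0 + N0) / 2^(Suc (Suc n))" unfolding q_def by (simp add: field_simps)
      also have "\<dots> \<le> (N0 + N0) / 2^(Suc (Suc n))" unfolding N0_def by (intro divide_right_mono) auto
      also have "\<dots> = N0 / 2^(Suc n)" by simp
      finally show "\<bar>U (Suc n) y\<bar> \<le> P0 / 2^(Suc n) \<and> \<bar>D (Suc n) y\<bar> \<le> N0 / 2^(Suc n)"
        using c1 by blast
    qed
  qed
  have layer: "\<exists>M N. \<forall>n y. \<bar>y\<bar> \<le> min r (\<rho> * 2^j) \<longrightarrow> \<bar>U n y\<bar> \<le> M / 2^n \<and> \<bar>D n y\<bar> \<le> N / 2^n" for j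
  proof (induction j)
    case 0
    have "min r (\<rho> * 2^0) = \<rho>" using \<rho>r by simp
    then show ?case using base by (intro exI[of _ P0] exI[of _ N0]) simp
  next
    case (Suc j)
    then obtain M N where MN: "\<And>n y. \<bar>y\<bar> \<le> min r (\<rho> * 2^j) \<Longrightarrow> \<bar>U n y\<bar> \<le> M / 2^n \<and> \<bar>D n y\<bar> \<le> N / 2^n"
      by blast
    have "\<bar>(0::real)\<bar> \<le> min r (\<rho> * 2^j)" using \<rho>pos r by simp
    from MN[OF this, of 0] have M0: "M \<ge> 0" and N0': "N \<ge> 0"
      by (auto intro: order_trans[OF abs_ge_zero])
    define M' where "M' = max P0 (2 * A * M)"
    define N' where "N' = max Q0 (2 * (A1 * M + A * N))"
    have "\<bar>U n y\<bar> \<le> M' / 2^n \<and> \<bar>D n y\<bar> \<le> N' / 2^n" if y: "\<bar>y\<bar> \<le> min r (\<rho> * 2^Suc j)" for n y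
    proof (cases n)
      case 0
      have yK: "y \<in> K" using y by (auto simp: K_def abs_le_iff)
      have "\<bar>U 0 y\<bar> \<le> M'" using P0(2)[OF yK] unfolding M'_def by simp
      moreover have "\<bar>D 0 y\<bar> \<le> N'" using Q0(2)[OF yK] unfolding N'_def by simp
      ultimately show ?thesis using 0 by simp
    next
      case (Suc m)
      have yK: "y \<in> K" using y by (auto simp: K_def abs_le_iff)
      have yS: "y \<in> S" using yK KS by auto
      have "\<bar>s y\<bar> \<le> \<bar>y\<bar> / 2" using sb[OF yS] .
      moreover have "\<bar>y\<bar> / 2 \<le> min r (\<rho> * 2^j)" using y r by auto
      ultimately have sy: "\<bar>s y\<bar> \<le> min r (\<rho> * 2^j)" by linarith
      have ay: "\<bar>a y\<bar> \<le> A" using A(2)[OF yK] by simp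
      have a'y: "\<bar>a' y\<bar> \<le> A1" using A1(2)[OF yK] by simp
      have s'y: "\<bar>s' y\<bar> \<le> 1" using sb'[OF yS] .
      define q where "q = (2::real)^m"
      have q: "q > 0" by (simp add: q_def)
      have IU: "\<bar>U m (s y)\<bar> \<le> M / q" and ID: "\<bar>D m (s y)\<bar> \<le> N / q"
        using MN[OF sy] by (auto simp: q_def)
      have "\<bar>U (Suc m) y\<bar> = \<bar>a y\<bar> * \<bar>U m (s y)\<bar>" by (simp add: abs_mult)
      also have "\<dots> \<le> A * (M / q)" by (intro mult_mono ay IU) (use A M0 q in auto)
      also have "\<dots> = (2 * A * M) / 2^(Suc m)" unfolding q_def by simp
      also have "\<dots> \<le> M' / 2^(Suc m)" unfolding M'_def by (intro divide_right_mono) auto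
      finally have c1: "\<bar>U (Suc m) y\<bar> \<le> M' / 2^(Suc m)" .
      have "\<bar>D (Suc m) y\<bar> \<le> \<bar>a' y\<bar> * \<bar>U m (s y)\<bar> + \<bar>a y\<bar> * (\<bar>D m (s y)\<bar> * \<bar>s' y\<bar>)"
        by (simp add: abs_mult abs_triangle_ineq[THEN order_trans])
      also have "\<dots> \<le> A1 * (M / q) + A * ((N / q) * 1)"
        by (intro add_mono mult_mono ay IU a'y ID s'y) (use A A1 M0 N0' q in auto)
      also have "\<dots> = (2 * (A1 * M + A * N)) / 2^(Suc m)" unfolding q_def by (simp add: field_simps)
      also have "\<dots> \<le> N' / 2^(Suc m)" unfolding N'_def by (intro divide_right_mono) auto
      finally show ?thesis using c1 Suc by blast
    qed
    then show ?case by blast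
  qed
  obtain j where j: "r / \<rho> < 2 ^ j" using real_arch_pow[of 2 "r / \<rho>"] by auto
  have "r \<le> \<rho> * 2^j" using j \<rho>pos by (simp add: field_simps)
  then have "min r (\<rho> * 2^j) = r" by simp
  with layer[of j] obtain M N where "\<forall>n y. \<bar>y\<bar> \<le> r \<longrightarrow> \<bar>U n y\<bar> \<le> M / 2^n \<and> \<bar>D n y\<bar> \<le> N / 2^n" by auto
  then show ?thesis by (intro exI[of _ M] exI[of _ N]) (auto simp: abs_le_iff)
qed

lemma local_series:
  assumes r: "0 < r" "r < e"
  shows "(\<forall>x\<in>{-r<..<r}. summable (\<lambda>n. U n x) \<and>
            ((\<lambda>x. \<Sum>n. U n x) has_real_derivative (\<Sum>n. D n x)) (at x))
         \<and> continuous_on {-r<..<r} (\<lambda>x. \<Sum>n. D n x)"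
proof -
  define T where "T = {-r<..<r}"
  have TS: "T \<subseteq> S" using r by (auto simp: T_def)
  obtain M N where MN: "\<And>n y. y \<in> {-r..r} \<Longrightarrow> \<bar>U n y\<bar> \<le> M / 2^n \<and> \<bar>D n y\<bar> \<le> N / 2^n"
    using bounds[OF r] by blast
  have geo: "summable (\<lambda>n. K / 2^n)" for K :: real
  proof -
    have "summable (\<lambda>n. K * (1/2)^n)" by (intro summable_mult summable_geometric) simp
    then show ?thesis by (simp add: power_one_over)
  qed
  have TK: "y \<in> T \<Longrightarrow> y \<in> {-r..r}" for y by (auto simp: T_def)
  have unif: "uniform_limit T (\<lambda>n x. \<Sum>i<n. D i x) (\<lambda>x. \<Sum>i. D i x) sequentially"
  proof (rule Weierstrass_m_test[OF _ geo[of N]])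
    fix n x assume "x \<in> T"
    then show "norm (D n x) \<le> N / 2^n" using MN[OF TK, of x n] by simp
  qed
  have summ: "summable (\<lambda>n. U n x)" if "x \<in> T" for x
  proof (rule summable_comparison_test'[OF geo[of M], of 0])
    fix n :: nat
    show "norm (U n x) \<le> M / 2^n" using MN[OF TK[OF that], of n] by simp
  qed
  have derT: "(U n has_field_derivative D n x) (at x within T)" if "x \<in> T" for n x
  proof -
    have "x \<in> S" using TS that by blast
    then have "(U n has_real_derivative D n x) (at x)" using UD[of n] by blast
    then show ?thesis by (rule has_field_derivative_at_within)
  qed
  have "0 \<in> T" using r by (simp add: T_def)
  have cvT: "convex T" by (simp add: T_def)
  from has_field_derivative_series[OF cvT derT unif \<open>0 \<in> T\<close> summ[OF \<open>0 \<in> T\<close>]]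
  obtain g where g: "\<And>x. x \<in> T \<Longrightarrow> (\<lambda>n. U n x) sums g x \<and> (g has_field_derivative (\<Sum>i. D i x)) (at x within T)"
    by blast
  have oT: "open T" by (simp add: T_def)
  have gx: "x \<in> T \<Longrightarrow> g x = (\<Sum>n. U n x)" for x using sums_unique[of "\<lambda>n. U n x" "g x"] g by blast
  have der: "((\<lambda>x. \<Sum>n. U n x) has_real_derivative (\<Sum>n. D n x)) (at x)" if x: "x \<in> T" for x
  proof -
    have "(g has_field_derivative (\<Sum>i. D i x)) (at x)"
      using g[OF x] at_within_open[OF x oT] by simp
    then show ?thesis by (rule has_field_derivative_transform_within_open[OF _ oT x]) (rule gx)
  qed
  have cont: "continuous_on T (\<lambda>x. \<Sum>n. D n x)"
  proof (rule uniform_limit_theorem[OF _ unif])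
    show "\<forall>\<^sub>F n in sequentially. continuous_on T (\<lambda>x. \<Sum>i<n. D i x)"
      using UD TS by (intro always_eventually allI continuous_on_sum) (auto intro: continuous_on_subset)
  qed simp
  have "\<forall>x\<in>T. summable (\<lambda>n. U n x) \<and> ((\<lambda>x. \<Sum>n. U n x) has_real_derivative (\<Sum>n. D n x)) (at x)"
    using summ der by blast
  with cont show ?thesis unfolding T_def by blast
qed

lemma main: "(\<forall>x\<in>S. summable (\<lambda>n. U n x)) \<and> C1_on S (\<lambda>x. \<Sum>n. U n x)"
proof -
  define F where "F = (\<lambda>x. \<Sum>n. U n x)"
  have loc: "\<exists>r. 0 < r \<and> r < e \<and> x \<in> {-r<..<r}" if "x \<in> S" for x
    using that by (intro exI[of _ "(\<bar>x\<bar> + e) / 2"]) (auto simp: abs_if field_simps)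
  have summ: "summable (\<lambda>n. U n x)" and derF: "(F has_real_derivative (\<Sum>n. D n x)) (at x)"
    if xS: "x \<in> S" for x
  proof -
    obtain r where r: "0 < r" "r < e" "x \<in> {-r<..<r}" using loc[OF xS] by blast
    have "summable (\<lambda>n. U n x) \<and> ((\<lambda>x. \<Sum>n. U n x) has_real_derivative (\<Sum>n. D n x)) (at x)"
      using local_series[OF r(1,2)] r(3) by blast
    then show "summable (\<lambda>n. U n x)" "(F has_real_derivative (\<Sum>n. D n x)) (at x)"
      unfolding F_def by blast+
  qed
  have "F differentiable_on S"
    unfolding differentiable_on_def
  proof
    fix x assume "x \<in> S"
    then have "F field_differentiable (at x within S)"
      using derF unfolding field_differentiable_def by (blast intro: has_field_derivative_at_within)
    then show "F differentiable (at x within S)" by (rule field_differentiable_imp_differentiable)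
  qed
  moreover have "continuous_on S (deriv F)"
  proof -
    have "isCont (deriv F) x" if x: "x \<in> S" for x
    proof -
      obtain r where r: "0 < r" "r < e" "x \<in> {-r<..<r}" using loc[OF x] by blast
      have sub: "{-r<..<r} \<subseteq> S" using r by auto
      have "continuous_on {-r<..<r} (\<lambda>x. \<Sum>n. D n x)" using local_series[OF r(1,2)] by blast
      moreover have "y \<in> {-r<..<r} \<Longrightarrow> deriv F y = (\<Sum>n. D n y)" for y
      proof -
        assume "y \<in> {-r<..<r}"
        then have "y \<in> S" using sub by blast
        then show ?thesis by (rule DERIV_imp_deriv[OF derF])
      qed
      ultimately have "continuous_on {-r<..<r} (deriv F)"
        by (metis (no_types, lifting) continuous_on_eq)
      then show ?thesis using r(3) by (simp add: continuous_on_eq_continuous_at)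
    qed
    then show ?thesis by (simp add: continuous_on_eq_continuous_at)
  qed
  ultimately show ?thesis using summ unfolding C1_on_def F_def by blast
qed

end


lemma inv_deriv:
  fixes f g :: "real \<Rightarrow> real"
  assumes "DERIV f x :> D" "D \<noteq> 0" "open S" "x \<in> S" "continuous_on S f" "\<And>z. z \<in> S \<Longrightarrow> g (f z) = z"
  shows "DERIV g (f x) :> inverse D"
  unfolding has_field_derivative_def
proof (rule has_derivative_inverse_strong[OF assms(3,4,5,6)])
  show "(f has_derivative (*) D) (at x)" using assms(1) by (simp add: has_field_derivative_def)
  show "(*) D \<circ> (*) (inverse D) = id" using assms(2) by (auto simp: fun_eq_iff)
qed

lemma theta_setup:
  fixes b \<theta> :: "real \<Rightarrow> real"
  assumes "smooth_germ b"
    and "flat_at_0 (\<lambda>t. b t - 1)"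
    and "inverse_germ \<theta> (\<lambda>t. t * b t)"
  shows "\<exists>\<delta>>0. \<exists>\<theta>'. (\<forall>y\<in>{-\<delta><..<\<delta>}. (\<theta> has_real_derivative \<theta>' y) (at y) \<and> \<bar>\<theta>' y\<bar> \<le> 2)
            \<and> continuous_on {-\<delta><..<\<delta>} \<theta>' \<and> \<theta> 0 = 0"
proof -
  obtain r0 where r0: "r0 > 0" "smooth_on {-r0<..<r0} b" using assms(1) unfolding smooth_germ_def by blast
  define B0 where "B0 = {-r0<..<r0}"
  have oB0: "open B0" by (simp add: B0_def)
  have b0: "b 0 = 1" using assms(2) unfolding flat_at_0_def by (metis funpow_0 eq_iff_diff_eq_0)
  have bdo: "b differentiable_on B0" using r0(2) unfolding smooth_on_def B0_def by (metis funpow_0)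
  have bdo1: "deriv b differentiable_on B0" using r0(2) unfolding smooth_on_def B0_def
    by (metis funpow_0 funpow_Suc_right comp_apply One_nat_def)
  have bd: "(b has_real_derivative deriv b t) (at t)" if "t \<in> B0" for t
  proof -
    have "b differentiable (at t within B0)" using bdo that by (simp add: differentiable_on_def)
    then have "b differentiable (at t)" using at_within_open[OF that oB0] by simp
    then show ?thesis by (simp add: DERIV_deriv_iff_real_differentiable)
  qed
  have bc: "continuous_on B0 b" by (rule differentiable_imp_continuous_on[OF bdo])
  have b'c: "continuous_on B0 (deriv b)" by (rule differentiable_imp_continuous_on[OF bdo1])
  define \<phi> where "\<phi> = (\<lambda>t::real. t * b t)"
  define \<phi>' where "\<phi>' = (\<lambda>t. b t + t * deriv b t)"
  have \<phi>d: "(\<phi> has_real_derivative \<phi>' t) (at t)" if "t \<in> B0" for t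
    unfolding \<phi>_def \<phi>'_def
    by (rule DERIV_cong[OF DERIV_mult[OF DERIV_ident bd[OF that]]]) simp
  have \<phi>'c: "continuous_on B0 \<phi>'" unfolding \<phi>'_def by (intro continuous_intros bc b'c)
  have \<phi>'0: "\<phi>' 0 = 1" using b0 by (simp add: \<phi>'_def)
  have "0 \<in> B0" using r0 by (simp add: B0_def)
  with \<phi>'c obtain d1 where d1: "d1 > 0" "\<And>t. t \<in> B0 \<Longrightarrow> dist t 0 < d1 \<Longrightarrow> dist (\<phi>' t) (\<phi>' 0) < 1/2"
    unfolding continuous_on_iff by (metis divide_pos_pos zero_less_one zero_less_numeral)
  from assms(3) have "\<forall>\<^sub>F x in nhds 0. \<theta> (\<phi> x) = x" unfolding inverse_germ_def \<phi>_def by blast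
  then obtain d2 where d2: "d2 > 0" "\<And>t. dist t 0 < d2 \<Longrightarrow> \<theta> (\<phi> t) = t"
    unfolding eventually_nhds_metric by blast
  define r1 where "r1 = min r0 (min d1 d2)"
  have r1: "r1 > 0" using r0 d1 d2 by (simp add: r1_def)
  define B1 where "B1 = {-r1<..<r1}"
  have B1B0: "B1 \<subseteq> B0" by (auto simp: B1_def B0_def r1_def)
  have \<phi>'b: "\<phi>' t > 1/2" if "t \<in> B1" for t
  proof -
    have "t \<in> B0" using that B1B0 by blast
    moreover have "dist t 0 < d1" using that by (auto simp: B1_def r1_def dist_real_def)
    ultimately have "dist (\<phi>' t) 1 < 1/2" using d1(2) \<phi>'0 by simp
    then show ?thesis by (simp add: dist_real_def abs_if split: if_splits)
  qed
  have \<theta>\<phi>: "\<theta> (\<phi> t) = t" if "t \<in> B1" for t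
    using d2(2) that by (auto simp: B1_def r1_def dist_real_def)
  from assms(3) have "\<forall>\<^sub>F x in nhds 0. \<phi> (\<theta> x) = x" unfolding inverse_germ_def \<phi>_def by blast
  then obtain d3 where d3: "d3 > 0" "\<And>t. dist t 0 < d3 \<Longrightarrow> \<phi> (\<theta> t) = t"
    unfolding eventually_nhds_metric by blast
  from assms(3) have t0: "\<theta> 0 = 0" and tc: "isCont \<theta> 0" unfolding inverse_germ_def by auto
  from tc t0 obtain d4 where d4: "d4 > 0" "\<And>t. t \<noteq> 0 \<Longrightarrow> norm (t - 0) < d4 \<Longrightarrow> norm (\<theta> t - 0) < r1"
    unfolding isCont_def LIM_eq using r1 by force
  define \<delta> where "\<delta> = min d3 d4"
  have \<delta>: "\<delta> > 0" using d3 d4 by (simp add: \<delta>_def)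
  define T where "T = {-\<delta><..<\<delta>}"
  have \<theta>B1: "\<theta> y \<in> B1" if "y \<in> T" for y
  proof (cases "y = 0")
    case True then show ?thesis using t0 r1 by (simp add: B1_def)
  next
    case False
    then have "\<bar>\<theta> y\<bar> < r1" using d4(2)[of y] that by (auto simp: T_def \<delta>_def)
    then show ?thesis by (auto simp: B1_def abs_less_iff)
  qed
  have \<phi>\<theta>: "\<phi> (\<theta> y) = y" if "y \<in> T" for y
    using d3(2) that by (auto simp: T_def \<delta>_def dist_real_def)
  have \<phi>c: "continuous_on B1 \<phi>"
    using \<phi>d B1B0 by (meson DERIV_continuous continuous_at_imp_continuous_on subsetD)
  define \<theta>' where "\<theta>' = (\<lambda>y. inverse (\<phi>' (\<theta> y)))"
  have \<theta>d: "(\<theta> has_real_derivative \<theta>' y) (at y)" if y: "y \<in> T" for y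
  proof -
    have "t \<in> B0" if "t \<in> B1" for t using that B1B0 by blast
    have "DERIV \<theta> (\<phi> (\<theta> y)) :> inverse (\<phi>' (\<theta> y))"
    proof (rule inv_deriv[where f=\<phi> and x="\<theta> y" and D="\<phi>' (\<theta> y)" and S=B1 and g=\<theta>])
      show "DERIV \<phi> (\<theta> y) :> \<phi>' (\<theta> y)" using \<phi>d \<theta>B1[OF y] B1B0 by blast
      show "\<phi>' (\<theta> y) \<noteq> 0" using \<phi>'b[OF \<theta>B1[OF y]] by simp
      show "open B1" by (simp add: B1_def)
      show "\<theta> y \<in> B1" by (rule \<theta>B1[OF y])
      show "continuous_on B1 \<phi>" by (rule \<phi>c)
      show "\<theta> (\<phi> z) = z" if "z \<in> B1" for z using \<theta>\<phi> that .
    qed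
    then show ?thesis using \<phi>\<theta>[OF y] by (simp add: \<theta>'_def)
  qed
  have \<theta>c: "continuous_on T \<theta>"
    using \<theta>d by (meson DERIV_continuous continuous_at_imp_continuous_on)
  have "continuous_on T (\<lambda>y. \<phi>' (\<theta> y))"
    by (rule continuous_on_compose2[OF continuous_on_subset[OF \<phi>'c B1B0] \<theta>c]) (use \<theta>B1 in auto)
  then have \<theta>'c: "continuous_on T \<theta>'" unfolding \<theta>'_def
    by (rule continuous_on_inverse) (use \<phi>'b \<theta>B1 in force)
  have \<theta>'b: "\<bar>\<theta>' y\<bar> \<le> 2" if "y \<in> T" for y
  proof -
    have p: "\<phi>' (\<theta> y) > 1/2" using \<phi>'b \<theta>B1 that by blast
    then have "inverse (\<phi>' (\<theta> y)) \<le> inverse (1/2)" by (intro le_imp_inverse_le) auto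
    then show ?thesis using p by (simp add: \<theta>'_def)
  qed
  show ?thesis
    using \<delta> \<theta>d \<theta>'b \<theta>'c t0 unfolding T_def by blast
qed



theorem lemma3p11:
  fixes b \<theta> :: "real \<Rightarrow> real"
  assumes "smooth_germ b"
    and "flat_at_0 (\<lambda>t. b t - 1)"
    and "inverse_germ \<theta> (\<lambda>t. t * b t)"
  shows "\<exists>\<epsilon>>0. \<forall>(\<alpha>::real \<Rightarrow> real) (lam::real \<Rightarrow> real).
           smooth_on {-\<epsilon><..<\<epsilon>} \<alpha> \<and> \<alpha> 0 = 0 \<and> deriv \<alpha> 0 = 0 \<and>
           C1_on {-\<epsilon><..<\<epsilon>} lam \<and> lam 0 = 0 \<and> deriv lam 0 = 0 \<longrightarrow>
           (let \<sigma> = (\<lambda>x. (\<theta> x) ^ 4);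
                u = (\<lambda>x n. (\<Prod>k\<le>n. \<alpha> ((\<sigma> ^^ k) x)) * lam ((\<sigma> ^^ (Suc n)) x))
            in (\<forall>x\<in>{-\<epsilon><..<\<epsilon>}. summable (u x)) \<and>
               C1_on {-\<epsilon><..<\<epsilon>} (\<lambda>x. \<Sum>n. u x n))"
proof -
  obtain \<delta> \<theta>' where \<delta>: "\<delta> > 0"
    and \<theta>d: "\<And>y. y \<in> {-\<delta><..<\<delta>} \<Longrightarrow> (\<theta> has_real_derivative \<theta>' y) (at y)"
    and \<theta>'b: "\<And>y. y \<in> {-\<delta><..<\<delta>} \<Longrightarrow> \<bar>\<theta>' y\<bar> \<le> 2"
    and \<theta>'c: "continuous_on {-\<delta><..<\<delta>} \<theta>'" and t0: "\<theta> 0 = 0"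
    using theta_setup[OF assms] by blast
  define e where "e = min \<delta> (1/4)"
  have e: "e > 0" using \<delta> by (simp add: e_def)
  define S where "S = {-e<..<e}"
  have S\<delta>: "S \<subseteq> {-\<delta><..<\<delta>}" by (auto simp: S_def e_def)
  have \<theta>b: "\<bar>\<theta> y\<bar> \<le> 2 * \<bar>y\<bar>" if y: "y \<in> S" for y
  proof -
    have "norm (\<theta> y - \<theta> 0) \<le> 2 * norm (y - 0)"
    proof (rule field_differentiable_bound[where S="{-\<delta><..<\<delta>}" and f'=\<theta>'])
      show "convex {-\<delta><..<\<delta>}" by simp
      show "(\<theta> has_field_derivative \<theta>' z) (at z within {-\<delta><..<\<delta>})" if "z \<in> {-\<delta><..<\<delta>}" for z
        using \<theta>d[OF that] by (rule has_field_derivative_at_within)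
      show "norm (\<theta>' z) \<le> 2" if "z \<in> {-\<delta><..<\<delta>}" for z using \<theta>'b[OF that] by simp
      show "y \<in> {-\<delta><..<\<delta>}" using y S\<delta> by blast
      show "0 \<in> {-\<delta><..<\<delta>}" using \<delta> by simp
    qed
    then show ?thesis using t0 by simp
  qed
  have ysmall: "\<bar>y\<bar> \<le> 1/4" if "y \<in> S" for y using that by (auto simp: S_def e_def)
  define \<sigma> where "\<sigma> = (\<lambda>x. (\<theta> x) ^ 4)"
  define \<sigma>' where "\<sigma>' = (\<lambda>y. 4 * (\<theta>' y * \<theta> y ^ 3))"
  have sd: "(\<sigma> has_real_derivative \<sigma>' y) (at y)" if "y \<in> S" for y
    unfolding \<sigma>_def \<sigma>'_def using DERIV_power[OF \<theta>d, of y 4] that S\<delta> by (auto simp: numeral_eq_Suc)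
  have sc: "continuous_on S \<sigma>'" unfolding \<sigma>'_def
    by (intro continuous_intros continuous_on_subset[OF \<theta>'c S\<delta>]
        continuous_on_subset[OF _ S\<delta>]) (meson DERIV_continuous continuous_at_imp_continuous_on \<theta>d)
  have th: "\<bar>\<theta> y\<bar> \<le> 1/2" if "y \<in> S" for y using \<theta>b[OF that] ysmall[OF that] by linarith
  have sb: "\<bar>\<sigma> y\<bar> \<le> \<bar>y\<bar> / 2" if y: "y \<in> S" for y
  proof -
    have "\<bar>\<sigma> y\<bar> = \<bar>\<theta> y\<bar> ^ 4" by (simp add: \<sigma>_def power_abs)
    also have "\<dots> \<le> (2 * \<bar>y\<bar>) ^ 4" by (rule power_mono[OF \<theta>b[OF y]]) simp
    also have "\<dots> = 16 * \<bar>y\<bar> ^ 3 * \<bar>y\<bar>" by (simp add: power_mult_distrib eval_nat_numeral)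
    also have "\<dots> \<le> 16 * (1/4) ^ 3 * \<bar>y\<bar>"
      by (intro mult_right_mono mult_left_mono power_mono ysmall[OF y]) auto
    also have "\<dots> \<le> \<bar>y\<bar> / 2" by (simp add: power3_eq_cube)
    finally show ?thesis .
  qed
  have sb': "\<bar>\<sigma>' y\<bar> \<le> 1" if y: "y \<in> S" for y
  proof -
    have "\<bar>\<sigma>' y\<bar> = 4 * (\<bar>\<theta>' y\<bar> * \<bar>\<theta> y\<bar> ^ 3)" by (simp add: \<sigma>'_def abs_mult power_abs)
    also have "\<dots> \<le> 4 * (2 * (1/2) ^ 3)"
      using S\<delta> y by (intro mult_left_mono mult_mono power_mono th[OF y] \<theta>'b) auto
    also have "\<dots> = 1" by (simp add: power3_eq_cube)
    finally show ?thesis .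
  qed
  show ?thesis
  proof (rule exI[of _ e], intro conjI allI impI e)
    fix \<alpha> lam :: "real \<Rightarrow> real"
    assume H: "smooth_on {-e<..<e} \<alpha> \<and> \<alpha> 0 = 0 \<and> deriv \<alpha> 0 = 0 \<and>
           C1_on {-e<..<e} lam \<and> lam 0 = 0 \<and> deriv lam 0 = 0"
    have oS: "open S" by (simp add: S_def)
    have ado: "\<alpha> differentiable_on S" using H unfolding smooth_on_def S_def by (metis funpow_0)
    have ado1: "deriv \<alpha> differentiable_on S" using H unfolding smooth_on_def S_def
      by (metis funpow_0 funpow_Suc_right comp_apply One_nat_def)
    have ldo: "lam differentiable_on S" and lc: "continuous_on S (deriv lam)"
      using H unfolding C1_on_def S_def by auto
    have dd: "(f has_real_derivative deriv f y) (at y)" if "f differentiable_on S" "y \<in> S" for f y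
    proof -
      have "f differentiable (at y within S)" using that by (simp add: differentiable_on_def)
      then have "f differentiable (at y)" using at_within_open[OF that(2) oS] by simp
      then show ?thesis by (simp add: DERIV_deriv_iff_real_differentiable)
    qed
    interpret setup3 e \<sigma> \<sigma>' \<alpha> "deriv \<alpha>" lam "deriv lam"
    proof
      show "0 < e" by (rule e)
    qed (use sd sc sb sb' dd[OF ado] dd[OF ldo] lc differentiable_imp_continuous_on[OF ado1] H in
         \<open>auto simp: S_def\<close>)
    have eq: "(\<Prod>k\<le>n. \<alpha> ((\<sigma> ^^ k) x)) * lam ((\<sigma> ^^ (Suc n)) x) = Uf \<sigma> \<alpha> lam n x" for x n
      by (rule Uf_prod[symmetric])
    have "(\<lambda>x. \<Sum>n. (\<Prod>k\<le>n. \<alpha> ((\<sigma> ^^ k) x)) * lam ((\<sigma> ^^ (Suc n)) x)) = (\<lambda>x. \<Sum>n. Uf \<sigma> \<alpha> lam n x)"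
      by (simp only: eq)
    then show "let \<sigma> = (\<lambda>x. (\<theta> x) ^ 4);
                u = (\<lambda>x n. (\<Prod>k\<le>n. \<alpha> ((\<sigma> ^^ k) x)) * lam ((\<sigma> ^^ (Suc n)) x))
            in (\<forall>x\<in>{-e<..<e}. summable (u x)) \<and>
               C1_on {-e<..<e} (\<lambda>x. \<Sum>n. u x n)"
      using main unfolding Let_def \<sigma>_def[symmetric] eq by simp
  qed
qed

end
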